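(* For every real $\theta$, \[\int_{\Gamma\backslash\mathcal{V}(\mathcal{T})}E\Big(v,\frac12+i\frac{\theta}{\log q}\Big)\,d\mu(v)=0.\]
   Context: $q$ odd prime power, $A=\mathbb{F}_q[T]$, $k_\infty=\mathbb{F}_q((T^{-1}))$, $|T|=q$, $\Gamma=\mathrm{PGL}_2(A)$, $\Gamma_\infty$ its upper-triangular subgroup. $\Gamma\backslash\mathcal{V}(\mathcal{T})=\{v_0,v_1,\dots\}$, the vertices of the quotient of the Bruhat–Tits tree of $\mathrm{PGL}_2(k_\infty)$, $v_n$ the orbit of the class of $T^n\mathcal{O}_\infty\oplus\mathcal{O}_\infty$; $\mu$ is the probability measure with $\mu(v_0)=\frac{q-1}{2q}$, $\mu(v_n)=\frac{q^2-1}{2q^{n+1}}$ for $n\ge1$. For $g=\begin{pmatrix}a&b\\c&d\end{pmatrix}\in\mathrm{GL}_2(k_\infty)$ let $\psi(g)=|\det g|\max\{|c|,|d|\}^{-2}$ and $E(g,s)=\sum_{\gamma\in\Gamma_\infty\backslash\Gamma}\psi(\gamma g)^s$, a rational function of $q^{-s}$, holomorphic on $\mathrm{Re}(s)\ge1/2$ except for simple poles at $s=1+k\pi i/\log q$, $k\in\mathbb{Z}$; $E(v_n,s):=E(\mathrm{diag}(T^n,1),s)$. *)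

theory Defs
  imports "HOL-Analysis.Analysis" "HOL-Computational_Algebra.Polynomial_Factorial"
begin

text \<open>A = F_q[T] is modelled by 'a poly with 'a a finite field, q = CARD('a).
  The absolute value on A (restriction of the one on k_infinity): |p| = q^deg p, |0| = 0.\<close>
definition absA :: "'a::{field,finite} poly \<Rightarrow> real" where
  "absA p = (if p = 0 then 0 else real CARD('a) ^ degree p)"

text \<open>psi(gamma * diag(T^n,1)) for gamma in PGL_2(A) with bottom row (c,d):
  gamma * diag(T^n,1) has bottom row (c T^n, d) and |det| = q^n (det gamma in F_q^*).\<close>
definition psi_n :: "nat \<Rightarrow> 'a::{field,finite} poly \<times> 'a poly \<Rightarrow> real" where
  "psi_n n cd = (case cd of (c, d) \<Rightarrow>
      real CARD('a) ^ n / (max (absA c * real CARD('a) ^ n) (absA d))\<^sup>2)"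

text \<open>A system of representatives of Gamma_infinity \ Gamma: the coset Gamma_infinity gamma
  is determined by the bottom row (c,d) of gamma, a coprime pair in A^2, up to F_q^*;
  we normalise the first nonzero entry to be monic.\<close>
definition coset_reps :: "('a::{field,finite} poly \<times> 'a poly) set" where
  "coset_reps = {(c, d). coprime c d \<and> (if c = 0 then lead_coeff d = 1 else lead_coeff c = 1)}"

text \<open>The measure mu on the vertices v_0, v_1, ... of the quotient graph.\<close>
definition mu_q :: "real \<Rightarrow> nat \<Rightarrow> real" where
  "mu_q q n = (if n = 0 then (q - 1) / (2 * q) else (q\<^sup>2 - 1) / (2 * q ^ (n + 1)))"

definition eis_poles :: "real \<Rightarrow> complex set" where
  "eis_poles q = {1 + of_int k * of_real pi * \<i> / of_real (ln q) | k. True}"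

end

theory Submission
  imports Defs "HOL-Complex_Analysis.Complex_Analysis"
begin


lemma inj_pCons2: "inj (\<lambda>(a::'a::zero,p::'a poly). pCons a p)"
  by (rule injI) (auto simp del: degree_pCons_eq_if)

lemma card_deg_le:
  "finite {p::'a::{field,finite} poly. degree p \<le> m} \<and> card {p::'a poly. degree p \<le> m} = CARD('a) ^ Suc m"
proof (induction m)
  case 0
  have "{p::'a poly. degree p \<le> 0} = range (\<lambda>a. [:a:])"
    by (auto elim!: degree_eq_zeroE)
  moreover have "inj (\<lambda>a::'a. [:a:])" by (auto intro: injI)
  ultimately show ?case by (simp add: card_image)
next
  case (Suc m)
  have eq: "{p::'a poly. degree p \<le> Suc m} = (\<lambda>(a,p). pCons a p) ` (UNIV \<times> {p. degree p \<le> m})"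
  proof (intro equalityI subsetI)
    fix p :: "'a poly" assume "p \<in> {p. degree p \<le> Suc m}"
    then show "p \<in> (\<lambda>(a,p). pCons a p) ` (UNIV \<times> {p. degree p \<le> m})"
      by (cases p) (auto simp: image_iff degree_pCons_eq_if split: if_splits)
  next
    fix p assume "p \<in> (\<lambda>(a,p). pCons a p) ` (UNIV \<times> {p::'a poly. degree p \<le> m})"
    then show "p \<in> {p. degree p \<le> Suc m}" by (auto simp: degree_pCons_eq_if)
  qed
  have inj: "inj_on (\<lambda>(a,p). pCons a p) (UNIV \<times> {p::'a poly. degree p \<le> m})"
    by (rule inj_on_subset[OF inj_pCons2]) simp
  show ?case using Suc unfolding eq by (simp add: card_image[OF inj] card_cartesian_product)
qed

lemma card_monic:
  "finite {p::'a::{field,finite} poly. degree p = k \<and> lead_coeff p = 1} \<and>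
   card {p::'a poly. degree p = k \<and> lead_coeff p = 1} = CARD('a) ^ k"
proof (induction k)
  case 0
  have "{p::'a poly. degree p = 0 \<and> lead_coeff p = 1} = {1}"
    by (auto elim!: degree_eq_zeroE)
  then show ?case by simp
next
  case (Suc k)
  let ?M = "{p::'a poly. degree p = k \<and> lead_coeff p = 1}"
  have eq: "{p::'a poly. degree p = Suc k \<and> lead_coeff p = 1} = (\<lambda>(a,p). pCons a p) ` (UNIV \<times> ?M)"
  proof (intro equalityI subsetI)
    fix p :: "'a poly" assume "p \<in> {p. degree p = Suc k \<and> lead_coeff p = 1}"
    then show "p \<in> (\<lambda>(a,p). pCons a p) ` (UNIV \<times> ?M)"
      by (cases p) (auto simp: image_iff degree_pCons_eq_if split: if_splits)
  next
    fix p assume "p \<in> (\<lambda>(a,p). pCons a p) ` (UNIV \<times> ?M)"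
    then show "p \<in> {p. degree p = Suc k \<and> lead_coeff p = 1}"
      by (auto simp: degree_pCons_eq_if)
  qed
  have inj: "inj_on (\<lambda>(a,p). pCons a p) (UNIV \<times> ?M)"
    by (rule inj_on_subset[OF inj_pCons2]) simp
  show ?case using Suc unfolding eq by (simp add: card_image[OF inj] card_cartesian_product)
qed

lemma card_deg_eq:
  "finite {p::'a::{field,finite} poly. degree p = j} \<and>
   real (card {p::'a poly. degree p = j}) = (if j = 0 then real CARD('a) else (real CARD('a) - 1) * real CARD('a) ^ j)"
proof (cases j)
  case 0
  then show ?thesis using card_deg_le[of 0, where 'a='a] by simp
next
  case (Suc m)
  have eq: "{p::'a poly. degree p = Suc m} = {p. degree p \<le> Suc m} - {p. degree p \<le> m}" by auto
  have sub: "{p::'a poly. degree p \<le> m} \<subseteq> {p. degree p \<le> Suc m}" by auto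
  have "real (card {p::'a poly. degree p = Suc m}) = real (CARD('a) ^ Suc (Suc m)) - real (CARD('a) ^ Suc m)"
    unfolding eq using card_deg_le[of m, where 'a='a] card_deg_le[of "Suc m", where 'a='a]
    by (simp add: card_Diff_subset[OF _ sub] of_nat_diff card_mono[OF _ sub])
  then show ?thesis using Suc card_deg_le[of "Suc m", where 'a='a] eq
    by (simp add: algebra_simps)
qed



lemma nonneg_has_sum_SigmaI:
  fixes f :: "'a \<times> 'b \<Rightarrow> real"
  assumes "\<And>x. x \<in> A \<Longrightarrow> ((\<lambda>y. f (x,y)) has_sum g x) (B x)" "(g has_sum S) A"
    "\<And>x y. x \<in> A \<Longrightarrow> y \<in> B x \<Longrightarrow> f (x,y) \<ge> 0"
  shows "(f has_sum S) (Sigma A B)"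
proof -
  have "f summable_on Sigma A B"
    by (rule summable_on_SigmaI[where g=g]) (use assms has_sum_imp_summable in auto)
  note sm = this
  show ?thesis by (rule has_sum_SigmaI[where g=g, OF _ assms(2) sm]) (use assms in auto)
qed

lemma has_sum_fibers:
  fixes key :: "'b \<Rightarrow> nat" and \<phi> :: "nat \<Rightarrow> real"
  assumes fin: "\<And>j. finite {x\<in>A. key x = j}" and nn: "\<And>j. \<phi> j \<ge> 0"
    and hs: "((\<lambda>j. \<phi> j * real (card {x\<in>A. key x = j})) has_sum S) UNIV"
  shows "((\<lambda>x. \<phi> (key x)) has_sum S) A"
proof -
  let ?B = "\<lambda>j. {x\<in>A. key x = j}"
  have 1: "((\<lambda>(j,x). \<phi> j) has_sum S) (Sigma UNIV ?B)"
  proof (rule nonneg_has_sum_SigmaI[OF _ hs])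
    fix j :: nat
    show "((\<lambda>y. case (j, y) of (j, x) \<Rightarrow> \<phi> j) has_sum \<phi> j * real (card (?B j))) (?B j)"
      using fin[of j] by (intro has_sum_finiteI) (auto simp: mult.commute)
  qed (use nn in auto)
  have bij: "bij_betw snd (Sigma UNIV ?B) A"
    by (auto simp: bij_betw_def inj_on_def image_iff)
  have "((\<lambda>p. \<phi> (key (snd p))) has_sum S) (Sigma UNIV ?B)"
    using 1 by (rule has_sum_cong[THEN iffD1, rotated]) auto
  then show ?thesis using has_sum_reindex_bij_betw[OF bij, of "\<lambda>x. \<phi> (key x)"] by simp
qed

lemma geom_has_sum:
  fixes r c :: real
  assumes "0 \<le> r" "r < 1" "0 \<le> c"
  shows "((\<lambda>j. c * r ^ j) has_sum c / (1 - r)) UNIV"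
proof (rule sums_nonneg_imp_has_sum)
  show "(\<lambda>j. c * r ^ j) sums (c / (1 - r))"
    using sums_mult[OF geometric_sums[of r], of c] assms by (simp add: divide_simps)
qed (use assms in auto)

lemma bezout_min:
  fixes x y :: "'a::field poly"
  assumes "x \<noteq> 0 \<or> y \<noteq> 0"
  shows "\<exists>h u v. h \<noteq> 0 \<and> h = u * x + v * y \<and> h dvd x \<and> h dvd y"
proof -
  let ?P = "\<lambda>h. h \<noteq> 0 \<and> (\<exists>u v. h = u * x + v * y)"
  have "?P x \<or> ?P y"
    using assms by (metis add.right_neutral add_0 mult_1 mult_zero_left)
  then obtain h0 where "?P h0" by blast
  from ex_has_least_nat[of ?P h0 degree, OF this] obtain h where
    Ph: "?P h" and min: "\<And>h'. ?P h' \<Longrightarrow> degree h \<le> degree h'" by blast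
  from Ph obtain u v where h0: "h \<noteq> 0" and huv: "h = u * x + v * y" by blast
  have dv: "h dvd z" if z: "\<exists>a b. z = a*x + b*y" for z
  proof (rule ccontr)
    assume nd: "\<not> h dvd z"
    then have nz: "z mod h \<noteq> 0" by (simp add: dvd_eq_mod_eq_0)
    from z obtain a b where zab: "z = a*x + b*y" by blast
    have "z mod h = z - (z div h) * h" by (metis add_diff_cancel_left' div_mult_mod_eq)
    also have "\<dots> = (a - (z div h)*u) * x + (b - (z div h) * v) * y"
      by (simp add: zab huv algebra_simps)
    finally have "?P (z mod h)" using nz by blast
    then have "degree h \<le> degree (z mod h)" by (rule min)
    moreover have "degree (z mod h) < degree h"
      using degree_mod_less[OF h0, of z] nz by auto
    ultimately show False by simp
  qed
  have "h dvd x" by (rule dv) (metis add.right_neutral mult_1 mult_zero_left)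
  moreover have "h dvd y" by (rule dv) (metis add_0 mult_1 mult_zero_left)
  ultimately show ?thesis using h0 huv by blast
qed

lemma coprime_bezout_poly:
  fixes c d :: "'a::field poly"
  assumes "coprime c d"
  shows "\<exists>u v. u * c + v * d = 1"
proof -
  have "c \<noteq> 0 \<or> d \<noteq> 0" using assms by auto
  from bezout_min[OF this] obtain h u v where "h \<noteq> 0" "h = u * c + v * d" "h dvd c" "h dvd d" by blast
  then have "is_unit h" using assms coprime_common_divisor by blast
  then obtain w where "1 = h * w" by (auto elim: dvdE)
  then have "(w * u) * c + (w * v) * d = 1" using \<open>h = u * c + v * d\<close> by (simp add: algebra_simps)
  then show ?thesis by blast
qed

lemma monic_assoc_eq:
  fixes g g' :: "'a::field poly"
  assumes "lead_coeff g = 1" "lead_coeff g' = 1" "g dvd g'" "g' dvd g"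
  shows "g = g'"
proof -
  from assms(3) obtain k where k: "g' = g * k" by (auto elim: dvdE)
  from assms(4) obtain k' where k': "g = g' * k'" by (auto elim: dvdE)
  have gnz: "g \<noteq> 0" using assms(1) by auto
  have "g * 1 = g * (k * k')" using k k' by (metis mult.assoc mult_1_right)
  then have "k * k' = 1" using gnz by (metis mult_cancel_left)
  then have "is_unit k" by (metis dvd_triv_left)
  then obtain a where "k = [:a:]" by (auto simp: is_unit_poly_iff)
  moreover have "lead_coeff g' = lead_coeff g * lead_coeff k" using k by (simp add: lead_coeff_mult)
  ultimately have "k = 1" using assms by (simp add: one_pCons)
  then show ?thesis using k by simp
qed



definition NN :: "('a::{field,finite} poly \<times> 'a poly) set" where
  "NN = {(x,y). (x = 0 \<and> lead_coeff y = 1) \<or> lead_coeff x = 1}"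

lemma decomp_exists:
  fixes x y :: "'a::{field,finite} poly"
  assumes "(x,y) \<in> NN"
  shows "\<exists>g c d. lead_coeff g = 1 \<and> (c,d) \<in> coset_reps \<and> x = g * c \<and> y = g * d"
proof -
  have "x \<noteq> 0 \<or> y \<noteq> 0" using assms by (auto simp: NN_def)
  from bezout_min[OF this] obtain h u v where h: "h \<noteq> 0" "h dvd x" "h dvd y" and huv: "h = u * x + v * y"
    by blast
  have lh: "lead_coeff h \<noteq> 0" using h(1) by simp
  define i where "i = inverse (lead_coeff h)"
  have inz: "i \<noteq> 0" using lh by (simp add: i_def)
  define g where "g = smult i h"
  have lg: "lead_coeff g = 1" using lh by (simp add: g_def i_def)
  have gnz: "g \<noteq> 0" using lg by auto
  have gx: "g dvd x" and gy: "g dvd y" using h inz by (simp_all add: g_def smult_dvd_iff)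
  have guv: "g = smult i u * x + smult i v * y" unfolding g_def huv by (simp add: smult_add_right)
  from gx obtain c where c: "x = g * c" by (auto elim: dvdE)
  from gy obtain d where d: "y = g * d" by (auto elim: dvdE)
  have cop: "coprime c d"
  proof (rule coprimeI)
    fix k assume kc: "k dvd c" and kd: "k dvd d"
    have "g * k dvd x" using kc c by (simp add: mult_dvd_mono)
    moreover have "g * k dvd y" using kd d by (simp add: mult_dvd_mono)
    ultimately have "g * k dvd g" unfolding guv by (intro dvd_add dvd_mult)
    then have "g * k dvd g * 1" by simp
    then show "is_unit k" using gnz by (subst (asm) dvd_times_left_cancel_iff) auto
  qed
  have norm: "if c = 0 then lead_coeff d = 1 else lead_coeff c = 1"
  proof (cases "c = 0")
    case True
    then have "x = 0" using c by simp
    then have "lead_coeff y = 1" using assms by (auto simp: NN_def)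
    then show ?thesis using True d lg by (simp add: lead_coeff_mult)
  next
    case False
    then have "x \<noteq> 0" using c gnz by simp
    then have "lead_coeff x = 1" using assms by (auto simp: NN_def)
    then show ?thesis using False c lg by (simp add: lead_coeff_mult)
  qed
  have "(c,d) \<in> coset_reps" using cop norm by (simp add: coset_reps_def)
  then show ?thesis using lg c d by blast
qed

lemma decomp_unique:
  fixes g g' c c' d d' :: "'a::{field,finite} poly"
  assumes "lead_coeff g = 1" "lead_coeff g' = 1" "(c,d) \<in> coset_reps" "(c',d') \<in> coset_reps"
    "g * c = g' * c'" "g * d = g' * d'"
  shows "g = g' \<and> c = c' \<and> d = d'"
proof -
  have dv: "h' dvd h" if "(a,b) \<in> coset_reps" "h * a = h' * a'" "h * b = h' * b'"
    for h h' a b a' b' :: "'a poly"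
  proof -
    from that(1) have "coprime a b" by (simp add: coset_reps_def)
    from coprime_bezout_poly[OF this] obtain u v where uv: "u * a + v * b = 1" by blast
    have "h = u * (h * a) + v * (h * b)" by (metis mult_1_right uv distrib_left mult.left_commute)
    also have "\<dots> = h' * (u * a' + v * b')" using that by (simp add: algebra_simps)
    finally show ?thesis by simp
  qed
  have "g = g'" using monic_assoc_eq[OF assms(1,2)] dv[OF assms(3,5,6)] dv[OF assms(4) assms(5,6)[symmetric]]
    by blast
  moreover have "g \<noteq> 0" using assms(1) by auto
  ultimately show ?thesis using assms(5,6) by simp
qed

lemma decomp_bij:
  "bij_betw (\<lambda>(g,cd). (g * fst cd, g * snd cd))
     ({g::'a::{field,finite} poly. lead_coeff g = 1} \<times> coset_reps) NN"
proof (rule bij_betw_imageI)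
  show "inj_on (\<lambda>(g,cd). (g * fst cd, g * snd cd)) ({g::'a poly. lead_coeff g = 1} \<times> coset_reps)"
    by (auto simp: inj_on_def dest: decomp_unique)
  show "(\<lambda>(g,cd). (g * fst cd, g * snd cd)) ` ({g::'a poly. lead_coeff g = 1} \<times> coset_reps) = NN"
  proof (intro equalityI subsetI)
    fix p assume "p \<in> (\<lambda>(g,cd). (g * fst cd, g * snd cd)) ` ({g::'a poly. lead_coeff g = 1} \<times> coset_reps)"
    then obtain g c d where p: "p = (g * c, g * d)" "lead_coeff g = 1" "(c,d) \<in> coset_reps" by auto
    then show "p \<in> NN"
      by (auto simp: NN_def coset_reps_def lead_coeff_mult split: if_splits)
  next
    fix p :: "'a poly \<times> 'a poly" assume "p \<in> NN"
    then obtain x y where "p = (x,y)" "(x,y) \<in> NN" by (cases p) auto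
    then show "p \<in> (\<lambda>(g,cd). (g * fst cd, g * snd cd)) ` ({g::'a poly. lead_coeff g = 1} \<times> coset_reps)"
      using decomp_exists[of x y] by (force simp: image_iff)
  qed
qed

lemma Q_ge2: "real CARD('a::{field,finite}) \<ge> 2"
proof -
  have "card {0, 1::'a} \<le> CARD('a)" by (rule card_mono) auto
  then show ?thesis by simp
qed

lemma pw: "(0::real) < Q \<Longrightarrow> (Q powr t) ^ k = Q powr (real k * t)"
  by (simp add: powr_realpow[symmetric] powr_powr mult.commute)

lemma max_pow: "(1::real) \<le> Q \<Longrightarrow> max (Q ^ i) (Q ^ j) = Q ^ max i j"
proof (cases "i \<le> j")
  case True
  assume "1 \<le> Q"
  then show ?thesis using True by (simp add: max_absorb2 power_increasing)
next
  case False
  assume "1 \<le> Q"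
  then show ?thesis using False by (simp add: max_absorb1 power_increasing)
qed

lemma powr_frac:
  fixes Q s :: real
  assumes "0 < Q" "n \<le> 2 * M"
  shows "(Q ^ n / (Q ^ M)\<^sup>2) powr s = (Q powr (-s)) ^ (2 * M - n)"
proof -
  have "Q ^ n / (Q ^ M)\<^sup>2 = Q powr (real n - 2 * real M)"
    using assms by (simp add: powr_diff powr_realpow[symmetric] power_mult[symmetric] powr_powr mult.commute)
  then have "(Q ^ n / (Q ^ M)\<^sup>2) powr s = Q powr ((real n - 2 * real M) * s)"
    by (simp add: powr_powr)
  also have "\<dots> = Q powr (real (2 * M - n) * (-s))"
    using assms by (simp add: of_nat_diff algebra_simps)
  also have "\<dots> = (Q powr (-s)) ^ (2 * M - n)" using assms by (simp add: pw)
  finally show ?thesis .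
qed

lemma psi_P1:
  fixes c d :: "'a::{field,finite} poly"
  assumes "lead_coeff c = 1"
  shows "psi_n n (c,d) powr s =
    (real CARD('a) powr (-s)) ^ (2 * max (degree c + n) (degree d) - n)"
proof -
  let ?Q = "real CARD('a)"
  have Q: "2 \<le> ?Q" by (rule Q_ge2)
  have cnz: "c \<noteq> 0" using assms by auto
  have "max (absA c * ?Q ^ n) (absA d) = ?Q ^ max (degree c + n) (degree d)"
  proof (cases "d = 0")
    case True then show ?thesis using cnz Q by (simp add: absA_def power_add)
  next
    case False then show ?thesis using cnz Q max_pow[of ?Q "degree c + n" "degree d"]
      by (simp add: absA_def power_add)
  qed
  then have "psi_n n (c,d) = ?Q ^ n / (?Q ^ max (degree c + n) (degree d))\<^sup>2"
    by (simp add: psi_n_def)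
  moreover have "n \<le> 2 * max (degree c + n) (degree d)" by (simp add: max_def)
  ultimately show ?thesis using Q powr_frac[of ?Q n "max (degree c + n) (degree d)" s] by simp
qed

lemma psi_P0:
  fixes d :: "'a::{field,finite} poly"
  assumes "lead_coeff d = 1"
  shows "psi_n n (0,d) powr s =
    (real CARD('a) powr s) ^ n * (real CARD('a) powr (-s)) ^ (2 * degree d)"
proof -
  let ?Q = "real CARD('a)"
  have Q: "2 \<le> ?Q" by (rule Q_ge2)
  have dnz: "d \<noteq> 0" using assms by auto
  have "psi_n n (0,d) = ?Q ^ n / (?Q ^ degree d)\<^sup>2"
    using dnz Q by (simp add: psi_n_def absA_def)
  also have "\<dots> = ?Q powr (real n - 2 * real (degree d))"
    using Q by (simp add: powr_diff powr_realpow[symmetric] power_mult[symmetric] powr_powr mult.commute)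
  finally have "psi_n n (0,d) powr s = ?Q powr ((real n - 2 * real (degree d)) * s)"
    by (simp add: powr_powr)
  also have "\<dots> = ?Q powr (real n * s) * ?Q powr (real (2 * degree d) * (-s))"
    by (simp add: powr_add[symmetric] algebra_simps)
  also have "\<dots> = (?Q powr s) ^ n * (?Q powr (-s)) ^ (2 * degree d)"
    using Q by (simp add: pw)
  finally show ?thesis .
qed

lemma absA_mult:
  fixes g c :: "'a::{field,finite} poly"
  assumes "g \<noteq> 0"
  shows "absA (g * c) = real CARD('a) ^ degree g * absA c"
  using assms by (cases "c = 0") (auto simp: absA_def degree_mult_eq power_add)

lemma absA_nonneg: "absA p \<ge> 0"
  by (simp add: absA_def)

lemma psi_nonneg: "psi_n n cd \<ge> 0"
  by (cases cd) (simp add: psi_n_def)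

lemma psi_PS:
  fixes g c d :: "'a::{field,finite} poly"
  assumes "lead_coeff g = 1"
  shows "psi_n n (g * c, g * d) powr s =
    (real CARD('a) powr (-s)) ^ (2 * degree g) * psi_n n (c,d) powr s"
proof -
  let ?Q = "real CARD('a)"
  have Q: "2 \<le> ?Q" by (rule Q_ge2)
  have gnz: "g \<noteq> 0" using assms by auto
  let ?m = "max (absA c * ?Q ^ n) (absA d)"
  have "max (absA (g * c) * ?Q ^ n) (absA (g * d)) = ?Q ^ degree g * ?m"
    using Q by (simp add: absA_mult[OF gnz] max_mult_distrib_left mult.assoc)
  then have "psi_n n (g * c, g * d) = psi_n n (c,d) / ?Q powr (2 * real (degree g))"
    using Q by (simp add: psi_n_def power_mult_distrib powr_realpow[symmetric] powr_powr
        power_mult[symmetric] mult.commute)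
  then have "psi_n n (g * c, g * d) powr s = psi_n n (c,d) powr s / ?Q powr (2 * real (degree g) * s)"
    using Q psi_nonneg[of n "(c,d)"] by (simp add: powr_divide powr_powr)
  also have "\<dots> = (?Q powr (-s)) ^ (2 * degree g) * psi_n n (c,d) powr s"
  proof -
    have "(?Q powr (-s)) ^ (2 * degree g) = ?Q powr (real (2 * degree g) * (-s))"
      using Q by (simp add: pw)
    also have "\<dots> = inverse (?Q powr (2 * real (degree g) * s))"
      by (simp add: powr_minus[symmetric])
    finally show ?thesis by (simp add: divide_inverse mult.commute)
  qed
  finally show ?thesis .
qed



lemma a_facts:
  fixes s :: real
  assumes "1 < s"
  defines "Q \<equiv> real CARD('a::{field,finite})"
  defines "a \<equiv> Q powr (-s)"
  shows "0 < a" "a < 1" "Q * a < 1" "Q * a\<^sup>2 < 1" "Q\<^sup>2 * a\<^sup>2 < 1" "a\<^sup>2 < 1" "2 \<le> Q"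
proof -
  have Q: "2 \<le> Q" unfolding Q_def by (rule Q_ge2)
  show "0 < a" using Q by (simp add: a_def)
  have "Q * a = Q powr (1 - s)" using Q by (simp add: a_def powr_diff powr_minus divide_inverse)
  also have "\<dots> < Q powr 0" using Q assms by (intro powr_less_mono) auto
  finally show Qa: "Q * a < 1" using Q by simp
  have a0: "0 < a" using Q by (simp add: a_def)
  show a1: "a < 1" using Qa a0 Q by (smt (verit) mult_less_cancel_right2)
  have "Q * a\<^sup>2 \<le> Q * a" using a0 a1 Q by (simp add: power2_eq_square mult_left_le)
  then show "Q * a\<^sup>2 < 1" using Qa by simp
  have "Q\<^sup>2 * a\<^sup>2 = (Q * a)\<^sup>2" by (simp add: power_mult_distrib)
  also have "\<dots> < 1" using Qa a0 Q by (simp add: power_less_one_iff abs_if)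
  finally show "Q\<^sup>2 * a\<^sup>2 < 1" .
  show "a\<^sup>2 < 1" using a0 a1 by (simp add: power_less_one_iff)
  show "2 \<le> Q" by (rule Q)
qed

lemma sum_Z:
  fixes s :: real
  assumes "1 < s"
  defines "Q \<equiv> real CARD('a::{field,finite})"
  defines "a \<equiv> Q powr (-s)"
  shows "((\<lambda>g::'a poly. a ^ (2 * degree g)) has_sum 1 / (1 - Q * a\<^sup>2)) {g. lead_coeff g = 1}"
proof -
  note af = a_facts[OF assms(1), where 'a='a, folded Q_def, folded a_def]
  have fib: "{x \<in> {g::'a poly. lead_coeff g = 1}. degree x = j} = {p. degree p = j \<and> lead_coeff p = 1}" for j
    by auto
  show ?thesis
  proof (rule has_sum_fibers[where \<phi> = "\<lambda>j. (a^2)^j", simplified power_mult[symmetric]])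
    show "finite {x \<in> {g::'a poly. lead_coeff g = 1}. degree x = j}" for j
      unfolding fib using card_monic[of j, where 'a='a] by simp
    show "((\<lambda>j. a ^ (2 * j) * real (card {x \<in> {g::'a poly. lead_coeff g = 1}. degree x = j})) has_sum 1 / (1 - Q * a\<^sup>2)) UNIV"
    proof -
      have e: "a ^ (2 * j) * real (card {x \<in> {g::'a poly. lead_coeff g = 1}. degree x = j}) = 1 * (Q * a\<^sup>2) ^ j" for j
      proof -
        have "real (card {x \<in> {g::'a poly. lead_coeff g = 1}. degree x = j}) = Q ^ j"
          unfolding fib using card_monic[of j, where 'a='a] by (simp add: Q_def)
        moreover have "a ^ (2 * j) = (a\<^sup>2) ^ j" by (simp add: power_mult)
        ultimately show ?thesis by (simp add: power_mult_distrib)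
      qed
      show ?thesis unfolding e using geom_has_sum[of "Q * a\<^sup>2" 1] af by simp
    qed
  qed (use af in simp)
qed

lemma sum_inner:
  fixes s :: real and c :: "'a::{field,finite} poly" and n :: nat
  assumes "1 < s" "lead_coeff c = 1"
  defines "Q \<equiv> real CARD('a)"
  defines "a \<equiv> Q powr (-s)"
  defines "K \<equiv> Q ^ (n+1) * a ^ n * (1 - a\<^sup>2) / (1 - Q * a\<^sup>2)"
  shows "((\<lambda>d. psi_n n (c,d) powr s) has_sum (Q * a\<^sup>2) ^ degree c * K) UNIV"
proof -
  note af = a_facts[OF assms(1), where 'a='a, folded Q_def, folded a_def]
  define k where "k = degree c"
  define m where "m = k + n + 1"
  have f: "psi_n n (c,d) powr s = a ^ (2 * max (k + n) (degree d) - n)" for d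
    using psi_P1[OF assms(2), of n d s] by (simp add: k_def a_def Q_def)
  define D1 where "D1 = {d::'a poly. degree d \<le> k + n}"
  define D2 where "D2 = {d::'a poly. k + n < degree d}"
  have U: "UNIV = D1 \<union> D2" and disj: "D1 \<inter> D2 = {}" by (auto simp: D1_def D2_def)
  have h1: "((\<lambda>d. a ^ (2 * max (k + n) (degree d) - n)) has_sum Q ^ (k + n + 1) * a ^ (2 * k + n)) D1"
  proof -
    have fin: "finite D1" and cd: "card D1 = CARD('a) ^ Suc (k + n)"
      using card_deg_le[of "k+n", where 'a='a] by (simp_all add: D1_def)
    have "((\<lambda>d. a ^ (2 * k + n)) has_sum Q ^ (k + n + 1) * a ^ (2 * k + n)) D1"
      using fin cd by (intro has_sum_finiteI) (simp_all add: Q_def)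
    then show ?thesis
      by (rule has_sum_cong[THEN iffD1, rotated]) (auto simp: D1_def max_def ac_simps)
  qed
  have h2: "((\<lambda>d. a ^ (2 * max (k + n) (degree d) - n)) has_sum
      (Q - 1) * Q ^ m * a ^ (2 * m - n) / (1 - Q * a\<^sup>2)) D2"
  proof -
    have fib: "{x \<in> D2. degree x - m = j} = {p. degree p = m + j}" for j
      by (auto simp: D2_def m_def)
    have "((\<lambda>d. a ^ (2 * (m + (degree d - m)) - n)) has_sum
      (Q - 1) * Q ^ m * a ^ (2 * m - n) / (1 - Q * a\<^sup>2)) D2"
    proof (rule has_sum_fibers[where \<phi> = "\<lambda>j. a ^ (2 * (m + j) - n)" and key = "\<lambda>d. degree d - m"])
      show "finite {x \<in> D2. degree x - m = j}" for j
        unfolding fib using card_deg_eq[of "m + j", where 'a='a] by simp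
      show "0 \<le> a ^ (2 * (m + j) - n)" for j using af by simp
      have "a ^ (2 * (m + j) - n) * real (card {x \<in> D2. degree x - m = j})
          = ((Q - 1) * Q ^ m * a ^ (2 * m - n)) * (Q * a\<^sup>2) ^ j" for j
      proof -
        have "2 * (m + j) - n = (2 * m - n) + 2 * j" by (simp add: m_def)
        then have A: "a ^ (2 * (m + j) - n) = a ^ (2 * m - n) * (a\<^sup>2) ^ j"
          by (simp add: power_add power_mult)
        have C: "real (card {x \<in> D2. degree x - m = j}) = (Q - 1) * Q ^ (m + j)"
          unfolding fib using card_deg_eq[of "m + j", where 'a='a] by (simp add: m_def Q_def)
        show ?thesis unfolding A C by (simp add: power_add power_mult_distrib)
      qed
      moreover have "(((\<lambda>j. ((Q - 1) * Q ^ m * a ^ (2 * m - n)) * (Q * a\<^sup>2) ^ j)) has_sum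
          (Q - 1) * Q ^ m * a ^ (2 * m - n) / (1 - Q * a\<^sup>2)) UNIV"
        using af by (intro geom_has_sum) auto
      ultimately show "((\<lambda>j. a ^ (2 * (m + j) - n) * real (card {x \<in> D2. degree x - m = j})) has_sum
          (Q - 1) * Q ^ m * a ^ (2 * m - n) / (1 - Q * a\<^sup>2)) UNIV"
        by simp
    qed
    then show ?thesis
      by (rule has_sum_cong[THEN iffD1, rotated]) (auto simp: D2_def m_def max_def)
  qed
  have "((\<lambda>d::'a poly. a ^ (2 * max (k + n) (degree d) - n)) has_sum
      (Q ^ (k + n + 1) * a ^ (2 * k + n) + (Q - 1) * Q ^ m * a ^ (2 * m - n) / (1 - Q * a\<^sup>2))) UNIV"
    using has_sum_Un_disjoint[OF h1 h2 disj] by (simp only: U[symmetric])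
  moreover have "Q ^ (k + n + 1) * a ^ (2 * k + n) + (Q - 1) * Q ^ m * a ^ (2 * m - n) / (1 - Q * a\<^sup>2)
      = (Q * a\<^sup>2) ^ k * K"
  proof -
    have e1: "2 * m - n = 2 * k + n + 2" by (simp add: m_def)
    have nz: "1 - Q * a\<^sup>2 \<noteq> 0" using af by simp
    have p1: "a ^ (2 * k + n + 2) = (a\<^sup>2) ^ k * a ^ n * a\<^sup>2"
      by (simp only: power_add power_mult)
    have p2: "a ^ (2 * k + n) = (a\<^sup>2) ^ k * a ^ n"
      by (simp only: power_add power_mult)
    have p3: "Q ^ (k + n + 1) = Q ^ k * Q ^ (n + 1)" by (simp add: power_add)
    have p4: "(Q * a\<^sup>2) ^ k = Q ^ k * (a\<^sup>2) ^ k" by (simp add: power_mult_distrib)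
    define A where "A = a\<^sup>2"
    have nzA: "1 - Q * A \<noteq> 0" using nz by (simp add: A_def)
    have p5: "Q ^ m = Q ^ k * Q ^ (n + 1)" by (simp add: m_def power_add)
    show ?thesis unfolding e1 K_def p1 p2 p3 p4 p5 A_def[symmetric] using nzA
      by (simp add: field_simps)
  qed
  ultimately show ?thesis by (simp add: f k_def)
qed



lemma sum_cr:
  fixes s :: real and n :: nat
  assumes "1 < s"
  defines "Q \<equiv> real CARD('a::{field,finite})"
  defines "a \<equiv> Q powr (-s)"
  shows "((\<lambda>cd. psi_n n cd powr s) has_sum
     ((1 / a) ^ n + Q ^ (n+1) * a ^ n * (1 - a\<^sup>2) / (1 - Q\<^sup>2 * a\<^sup>2))) (coset_reps :: ('a poly \<times> 'a poly) set)"
proof -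
  note af = a_facts[OF assms(1), where 'a='a, folded Q_def, folded a_def]
  define K where "K = Q ^ (n+1) * a ^ n * (1 - a\<^sup>2) / (1 - Q * a\<^sup>2)"
  define Mon where "Mon = {g::'a poly. lead_coeff g = 1}"
  let ?f = "\<lambda>cd::'a poly \<times> 'a poly. psi_n n cd powr s"
  have K0: "0 \<le> K" using af unfolding K_def by (intro divide_nonneg_pos mult_nonneg_nonneg) auto
  have Z: "((\<lambda>g::'a poly. a ^ (2 * degree g)) has_sum 1 / (1 - Q * a\<^sup>2)) Mon"
    unfolding Mon_def a_def Q_def by (rule sum_Z[OF assms(1)])
  have N1: "(?f has_sum K / (1 - Q\<^sup>2 * a\<^sup>2)) (Mon \<times> UNIV)"
  proof (rule nonneg_has_sum_SigmaI[where g = "\<lambda>c. (Q * a\<^sup>2) ^ degree c * K"])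
    fix c :: "'a poly" assume "c \<in> Mon"
    then show "((\<lambda>d. ?f (c, d)) has_sum (Q * a\<^sup>2) ^ degree c * K) UNIV"
      unfolding K_def Q_def a_def Mon_def by (intro sum_inner[OF assms(1)]) simp
  next
    have fib: "{x \<in> Mon. degree x = j} = {p. degree p = j \<and> lead_coeff p = 1}" for j
      by (auto simp: Mon_def)
    show "((\<lambda>c. (Q * a\<^sup>2) ^ degree c * K) has_sum K / (1 - Q\<^sup>2 * a\<^sup>2)) Mon"
    proof (rule has_sum_fibers[where \<phi> = "\<lambda>j. (Q * a\<^sup>2) ^ j * K"])
      show "finite {x \<in> Mon. degree x = j}" for j
        unfolding fib using card_monic[of j, where 'a='a] by simp
      show "0 \<le> (Q * a\<^sup>2) ^ j * K" for j using af K0 by simp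
      have e: "(Q * a\<^sup>2) ^ j * K * real (card {x \<in> Mon. degree x = j}) = K * (Q\<^sup>2 * a\<^sup>2) ^ j" for j
      proof -
        have "real (card {x \<in> Mon. degree x = j}) = Q ^ j"
          unfolding fib using card_monic[of j, where 'a='a] by (simp add: Q_def)
        then show ?thesis by (simp add: power_mult_distrib power2_eq_square algebra_simps)
      qed
      show "((\<lambda>j. (Q * a\<^sup>2) ^ j * K * real (card {x \<in> Mon. degree x = j})) has_sum K / (1 - Q\<^sup>2 * a\<^sup>2)) UNIV"
        unfolding e using af K0 by (intro geom_has_sum) auto
    qed
  next
    fix c d show "0 \<le> ?f (c,d)" by simp
  qed
  have N0: "(?f has_sum (1 / a) ^ n * (1 / (1 - Q * a\<^sup>2))) ((\<lambda>d. (0, d)) ` Mon)"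
  proof -
    have inj: "inj_on (\<lambda>d::'a poly. (0::'a poly, d)) Mon" by (auto simp: inj_on_def)
    have hs: "((\<lambda>d. (1 / a) ^ n * a ^ (2 * degree d)) has_sum (1 / a) ^ n * (1 / (1 - Q * a\<^sup>2))) Mon"
      by (rule has_sum_cmult_right[OF Z])
    have eq: "(1 / a) ^ n * a ^ (2 * degree d) = (?f \<circ> (\<lambda>d. (0, d))) d" if "d \<in> Mon" for d
    proof -
      have "Q powr s = 1 / a" using af by (simp add: a_def powr_minus divide_inverse)
      then show ?thesis using psi_P0[of d n s] that by (simp add: Mon_def Q_def a_def)
    qed
    have "((?f \<circ> (\<lambda>d. (0, d))) has_sum (1 / a) ^ n * (1 / (1 - Q * a\<^sup>2))) Mon"
      using has_sum_cong[of Mon _ "?f \<circ> (\<lambda>d. (0, d))", OF eq] hs by blast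
    then show ?thesis by (simp add: has_sum_reindex[OF inj])
  qed
  define T where "T = (1 / a) ^ n * (1 / (1 - Q * a\<^sup>2)) + K / (1 - Q\<^sup>2 * a\<^sup>2)"
  have NNeq: "NN = (\<lambda>d. (0, d)) ` Mon \<union> Mon \<times> UNIV"
    by (auto simp: NN_def Mon_def image_iff)
  have NN: "(?f has_sum T) NN"
    unfolding NNeq T_def by (rule has_sum_Un_disjoint[OF N0 N1]) (auto simp: Mon_def)
  have P: "((\<lambda>(g,cd). ?f (g * fst cd, g * snd cd)) has_sum T) (Mon \<times> coset_reps)"
    using NN has_sum_reindex_bij_betw[OF decomp_bij[where 'a='a], of ?f T]
    by (simp add: Mon_def case_prod_unfold)
  have P2: "((\<lambda>(g,cd). a ^ (2 * degree g) * ?f cd) has_sum T) (Mon \<times> coset_reps)"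
    using P by (rule has_sum_cong[THEN iffD1, rotated])
      (auto simp: Mon_def psi_PS a_def Q_def)
  have sub: "coset_reps \<subseteq> NN"
    by (auto simp: coset_reps_def NN_def split: if_splits)
  have summ: "?f summable_on coset_reps"
    by (rule summable_on_subset_banach[OF has_sum_imp_summable[OF NN] sub])
  define W where "W = infsum ?f coset_reps"
  have W: "(?f has_sum W) coset_reps" unfolding W_def using summ by (rule has_sum_infsum)
  have "((\<lambda>g. a ^ (2 * degree g) * W) has_sum T) Mon"
    using has_sum_Sigma'[OF P2] W by (simp add: has_sum_cmult_right)
  moreover have "((\<lambda>g. a ^ (2 * degree g) * W) has_sum 1 / (1 - Q * a\<^sup>2) * W) Mon"
    by (rule has_sum_cmult_left[OF Z])
  ultimately have TW: "T = 1 / (1 - Q * a\<^sup>2) * W" by (rule has_sum_unique)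
  have "W = (1 / a) ^ n + Q ^ (n+1) * a ^ n * (1 - a\<^sup>2) / (1 - Q\<^sup>2 * a\<^sup>2)"
  proof -
    have nz: "1 - Q * a\<^sup>2 \<noteq> 0" "1 - Q\<^sup>2 * a\<^sup>2 \<noteq> 0" using af by auto
    have "W = T * (1 - Q * a\<^sup>2)" using TW nz by (simp add: field_simps)
    also have "\<dots> = (1 / a) ^ n + Q ^ (n+1) * a ^ n * (1 - a\<^sup>2) / (1 - Q\<^sup>2 * a\<^sup>2)"
    proof -
      have gen: "(1 / X * (1 / (1 - QA)) + QYX * A1 / (1 - QA) / D) * (1 - QA) = 1 / X + QYX * A1 / D"
        if "1 - QA \<noteq> 0" "X \<noteq> 0" "D \<noteq> 0" for X QA QYX A1 D :: real
        using that by (simp add: distrib_right)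
      show ?thesis unfolding T_def K_def power_one_over
        using gen[OF nz(1) _ nz(2), of "a ^ n"] af 
        by (simp add: mult.assoc)
    qed
    finally show ?thesis .
  qed
  then show ?thesis using W by simp
qed



definition Fz :: "real \<Rightarrow> nat \<Rightarrow> complex \<Rightarrow> complex" where
  "Fz Q n z = (1 / z) ^ n + of_real Q ^ (n+1) * z ^ n * (1 - z\<^sup>2) / (1 - (of_real Q)\<^sup>2 * z\<^sup>2)"

definition zf :: "real \<Rightarrow> complex \<Rightarrow> complex" where
  "zf Q s = exp (- (s * of_real (ln Q)))"

lemma E_real:
  fixes E :: "nat \<Rightarrow> complex \<Rightarrow> complex" and t :: real
  assumes E_series: "\<And>n s. Re s > 1 \<Longrightarrow>
        ((\<lambda>cd. complex_of_real (psi_n n cd) powr s) has_sum E n s)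
          (coset_reps :: ('a::{field,finite} poly \<times> 'a poly) set)"
    and t: "1 < t"
  shows "E n (of_real t) = Fz (real CARD('a)) n (zf (real CARD('a)) (of_real t))"
proof -
  let ?Q = "real CARD('a)"
  define a where "a = ?Q powr (-t)"
  note af = a_facts[OF t, where 'a='a, folded a_def]
  define V where "V = (1 / a) ^ n + ?Q ^ (n+1) * a ^ n * (1 - a\<^sup>2) / (1 - ?Q\<^sup>2 * a\<^sup>2)"
  have h1: "((\<lambda>cd. complex_of_real (psi_n n cd) powr of_real t) has_sum E n (of_real t))
          (coset_reps :: ('a poly \<times> 'a poly) set)"
    using E_series[of "of_real t" n] t by simp
  have h2: "((\<lambda>cd. complex_of_real (psi_n n cd powr t)) has_sum of_real V)
          (coset_reps :: ('a poly \<times> 'a poly) set)"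
    unfolding V_def a_def by (rule has_sum_of_real[OF sum_cr[OF t]])
  have "((\<lambda>cd. complex_of_real (psi_n n cd) powr of_real t) has_sum of_real V)
          (coset_reps :: ('a poly \<times> 'a poly) set)"
    using h2 by (simp add: powr_of_real psi_nonneg)
  with h1 have EV: "E n (of_real t) = of_real V" by (rule has_sum_unique)
  have za: "zf ?Q (of_real t) = of_real a"
  proof -
    have "- (complex_of_real t * of_real (ln ?Q)) = of_real (- (t * ln ?Q))" by simp
    then show ?thesis using af by (simp only: zf_def exp_of_real a_def powr_def) simp
  qed
  show ?thesis unfolding EV za V_def Fz_def by simp
qed

lemma exp_sq_eq:
  fixes Q :: real
  assumes "0 < Q"
  shows "(of_real Q)\<^sup>2 * (zf Q s)\<^sup>2 = exp ((2 - 2 * s) * of_real (ln Q))"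
proof -
  have "complex_of_real Q = exp (of_real (ln Q))" using assms by (simp add: exp_of_real)
  then have "(complex_of_real Q)\<^sup>2 * (zf Q s)\<^sup>2 =
      exp (of_real (ln Q)) * exp (of_real (ln Q)) * (exp (- (s * of_real (ln Q))) * exp (- (s * of_real (ln Q))))"
    by (simp add: zf_def power2_eq_square)
  also have "\<dots> = exp ((2 - 2 * s) * of_real (ln Q))"
    by (simp add: exp_add[symmetric] algebra_simps)
  finally show ?thesis .
qed

lemma pole_char:
  fixes Q :: real
  assumes "1 < Q" "1 - (of_real Q)\<^sup>2 * (zf Q s)\<^sup>2 = 0"
  shows "s \<in> eis_poles Q"
proof -
  let ?L = "ln Q"
  have L: "0 < ?L" using assms by simp
  have "exp ((2 - 2 * s) * of_real ?L) = 1" using assms exp_sq_eq[of Q s] by simp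
  then obtain k :: int where re: "Re ((2 - 2 * s) * of_real ?L) = 0"
      and im: "Im ((2 - 2 * s) * of_real ?L) = of_int (2 * k) * pi"
    by (auto simp: exp_eq_1)
  have "Re s = 1" using re L by simp
  moreover have "Im s = of_int (-k) * pi / ?L" using im L by (simp add: field_simps)
  ultimately have "s = 1 + of_int (-k) * of_real pi * \<i> / of_real ?L"
    by (intro complex_eqI) (simp_all add: Re_divide_of_real Im_divide_of_real)
  then show ?thesis unfolding eis_poles_def by blast
qed

lemma poles_re:
  "s \<in> eis_poles Q \<Longrightarrow> Re s = 1 \<and> (\<exists>k::int. Im s = of_int k * pi / ln Q)"
  by (auto simp: eis_poles_def Re_divide_of_real Im_divide_of_real)

lemma F_holo:
  assumes "\<And>s. s \<in> A \<Longrightarrow> 1 - (of_real Q)\<^sup>2 * (zf Q s)\<^sup>2 \<noteq> 0"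
  shows "(\<lambda>s. Fz Q n (zf Q s)) holomorphic_on A"
proof -
  have hz: "(\<lambda>z. zf Q z) holomorphic_on A"
    unfolding zf_def by (rule holomorphic_on_exp') (intro holomorphic_intros)
  have nz: "zf Q z \<noteq> 0" for z by (simp add: zf_def)
  show ?thesis using assms nz unfolding Fz_def by (intro holomorphic_intros hz) auto
qed



lemma seg_points:
  fixes a b p :: complex
  assumes "p \<in> closed_segment a b"
  obtains u where "0 \<le> u" "u \<le> 1" "Re p = (1 - u) * Re a + u * Re b" "Im p = (1 - u) * Im a + u * Im b"
  using assms by (auto simp: in_segment)

lemma E_eq_F:
  fixes E :: "nat \<Rightarrow> complex \<Rightarrow> complex" and \<theta> :: real
  assumes E_series: "\<And>n s. Re s > 1 \<Longrightarrow>
        ((\<lambda>cd. complex_of_real (psi_n n cd) powr s) has_sum E n s)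
          (coset_reps :: ('a::{field,finite} poly \<times> 'a poly) set)"
    and E_holo: "\<And>n. \<exists>U. open U \<and> {s. Re s \<ge> 1/2} - eis_poles (real CARD('a)) \<subseteq> U
                        \<and> E n holomorphic_on U"
  defines "Q \<equiv> real CARD('a)"
  defines "s0 \<equiv> 1/2 + \<i> * of_real (\<theta> / ln Q)"
  shows "E n s0 = Fz Q n (zf Q s0)"
proof -
  have Q2: "2 \<le> Q" unfolding Q_def by (rule Q_ge2)
  have L: "0 < ln Q" using Q2 by simp
  from E_holo[of n] obtain U where U: "open U" "{s. Re s \<ge> 1/2} - eis_poles Q \<subseteq> U"
    "E n holomorphic_on U" by (auto simp: Q_def)
  define D where "D = {s. 1 - (of_real Q)\<^sup>2 * (zf Q s)\<^sup>2 \<noteq> 0}"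
  have oD: "open D" unfolding D_def zf_def
    by (intro open_Collect_neq continuous_intros)
  define V0 where "V0 = U \<inter> D"
  have oV0: "open V0" unfolding V0_def using U oD by auto
  have good: "p \<in> V0" if "Re p \<ge> 1/2" "p \<notin> eis_poles Q" for p
  proof -
    have "p \<in> U" using that U(2) by auto
    moreover have "p \<in> D" using pole_char[of Q p] Q2 that(2) by (auto simp: D_def)
    ultimately show ?thesis by (simp add: V0_def)
  qed
  define \<tau> where "\<tau> = pi / (2 * ln Q)"
  define p1 where "p1 = Complex (1/2) \<tau>"
  define p2 where "p2 = Complex (3/2) \<tau>"
  define p3 :: complex where "p3 = 3/2"
  define p4 :: complex where "p4 = 2"
  define C where "C = closed_segment s0 p1 \<union> (closed_segment p1 p2 \<union> (closed_segment p2 p3 \<union> closed_segment p3 p4))"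
  have conC: "connected C" unfolding C_def
    by (intro connected_Un connected_segment) (auto simp: ends_in_segment)
  have s0C: "s0 \<in> C" by (simp add: C_def)
  have nopole: "p \<notin> eis_poles Q" if "Re p \<noteq> 1" for p using poles_re[of p Q] that by auto
  have CV: "C \<subseteq> V0"
  proof
    fix p assume "p \<in> C"
    then consider "p \<in> closed_segment s0 p1" | "p \<in> closed_segment p1 p2" | "p \<in> closed_segment p2 p3"
      | "p \<in> closed_segment p3 p4" by (auto simp: C_def)
    then show "p \<in> V0"
    proof cases
      case 1
      then obtain u where "Re p = (1 - u) * Re s0 + u * Re p1" by (rule seg_points)
      then have "Re p = (1 - u) * (1/2) + u * (1/2)" by (simp add: s0_def p1_def)
      then have "Re p = 1/2" by argo
      then show ?thesis by (intro good nopole) auto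
    next
      case 2
      then obtain u where u: "0 \<le> u" "u \<le> 1" "Re p = (1 - u) * Re p1 + u * Re p2"
        "Im p = (1 - u) * Im p1 + u * Im p2" by (rule seg_points)
      then have re: "Re p \<ge> 1/2" by (simp add: p1_def p2_def field_simps)
      have im: "Im p = \<tau>" using u by (simp add: p1_def p2_def algebra_simps)
      have "p \<notin> eis_poles Q"
      proof
        assume "p \<in> eis_poles Q"
        then obtain k :: int where "Im p = of_int k * pi / ln Q" using poles_re by blast
        then have "of_int k * pi / ln Q = pi / (2 * ln Q)" using im by (simp add: \<tau>_def)
        then have "of_int (2 * k) = (1::real)" using L by (simp add: field_simps)
        then have "2 * k = 1" by linarith
        then show False by presburger
      qed
      then show ?thesis using re by (intro good)
    next
      case 3
      then obtain u where "Re p = (1 - u) * Re p2 + u * Re p3" by (rule seg_points)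
      then have "Re p = 3/2" by (simp add: p2_def p3_def field_simps)
      then show ?thesis by (intro good nopole) auto
    next
      case 4
      then obtain u where "0 \<le> u" "u \<le> 1" "Re p = (1 - u) * Re p3 + u * Re p4" by (rule seg_points)
      then have "Re p \<ge> 3/2" by (simp add: p3_def p4_def field_simps)
      then show ?thesis by (intro good nopole) auto
    qed
  qed
  define S where "S = connected_component_set V0 s0"
  have CS: "C \<subseteq> S" unfolding S_def by (rule connected_component_maximal[OF s0C conC CV])
  have SV: "S \<subseteq> V0" unfolding S_def by (rule connected_component_subset)
  have oS: "open S" unfolding S_def by (rule open_connected_component[OF oV0])
  have cS: "connected S" unfolding S_def by simp
  let ?g = "\<lambda>s. E n s - Fz Q n (zf Q s)"
  have hg: "?g holomorphic_on S"
  proof (intro holomorphic_intros)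
    show "E n holomorphic_on S" using SV by (intro holomorphic_on_subset[OF U(3)]) (auto simp: V0_def)
    show "(\<lambda>s. Fz Q n (zf Q s)) holomorphic_on S"
      by (rule F_holo) (use SV in \<open>auto simp: V0_def D_def\<close>)
  qed
  have segS: "closed_segment p3 p4 \<subseteq> S" using CS by (auto simp: C_def)
  have p3S: "p3 \<in> S" using segS by auto
  have lim: "p3 islimpt closed_segment p3 p4"
  proof (rule connected_imp_perfect)
    show "closed_segment p3 p4 \<noteq> {x}" for x
    proof
      assume "closed_segment p3 p4 = {x}"
      then have "p3 = x" "p4 = x" using ends_in_segment[of p3 p4] by auto
      then show False by (simp add: p3_def p4_def)
    qed
  qed auto
  have zero: "?g z = 0" if "z \<in> closed_segment p3 p4" for z
  proof -
    from that obtain u where u: "0 \<le> u" "u \<le> 1" "z = (1 - u) *\<^sub>R p3 + u *\<^sub>R p4"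
      by (auto simp: in_segment)
    define t where "t = (1 - u) * (3/2) + u * 2"
    have zt: "z = of_real t" using u by (simp add: t_def p3_def p4_def scaleR_conv_of_real)
    have "1 < t" using u by (simp add: t_def field_simps)
    from E_real[OF E_series this, of n] show ?thesis by (simp add: zt Q_def)
  qed
  have "?g s0 = 0"
    by (rule analytic_continuation[OF hg oS cS segS p3S lim zero]) (use CS s0C in auto)
  then show ?thesis by simp
qed



lemma final_identity:
  fixes q z :: complex
  assumes "q \<noteq> 0" "z \<noteq> 0" "z \<noteq> 1" "q * z \<noteq> 1" "q * z \<noteq> -1"
  shows "(q - 1) / (2 * q) * (1 + q * ((1 - z\<^sup>2) / (1 - q\<^sup>2 * z\<^sup>2)))
     + ((q\<^sup>2 - 1) / (2 * q) / (1 - 1 / (q * z)) - (q\<^sup>2 - 1) / (2 * q))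
     + ((q\<^sup>2 - 1) / 2 * ((1 - z\<^sup>2) / (1 - q\<^sup>2 * z\<^sup>2)) / (1 - z)
        - (q\<^sup>2 - 1) / 2 * ((1 - z\<^sup>2) / (1 - q\<^sup>2 * z\<^sup>2))) = 0"
proof -
  have d1: "1 - q\<^sup>2 * z\<^sup>2 = (1 - q * z) * (1 + q * z)" by (simp add: power2_eq_square algebra_simps)
  have d2: "1 - z\<^sup>2 = (1 - z) * (1 + z)" by (simp add: power2_eq_square algebra_simps)
  have n1: "1 - q * z \<noteq> 0" "1 + q * z \<noteq> 0" "1 - z \<noteq> 0"
    using assms by (auto simp: algebra_simps add_eq_0_iff)
  have n2: "1 - 1 / (q * z) \<noteq> 0" using assms by (auto simp: field_simps)
  have n3: "q * z - 1 \<noteq> 0" using assms by auto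
  have qz: "q * z \<noteq> 0" using assms by simp
  have h1: "(q\<^sup>2 - 1) / (2 * q) / (1 - 1 / (q * z)) - (q\<^sup>2 - 1) / (2 * q) = (q\<^sup>2 - 1) / (2 * q) / (q * z - 1)"
  proof -
    have "1 - 1 / (q * z) = (q * z - 1) / (q * z)" using qz by (simp add: field_simps)
    then show ?thesis using qz n3 assms(1) by (simp add: field_simps)
  qed
  have h2: "(q\<^sup>2 - 1) / 2 * ((1 - z) * (1 + z) / ((1 - q * z) * (1 + q * z))) / (1 - z)
        - (q\<^sup>2 - 1) / 2 * ((1 - z) * (1 + z) / ((1 - q * z) * (1 + q * z)))
      = (q\<^sup>2 - 1) / 2 * (z * (1 + z)) / ((1 - q * z) * (1 + q * z))"
  proof -
    have g: "K * ((1 - z) * (1 + z) / D) / (1 - z) - K * ((1 - z) * (1 + z) / D) = K * (z * (1 + z)) / D"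
      if "D \<noteq> 0" for K D :: complex
      using that n1(3) by (simp add: field_simps)
    show ?thesis using g[of "(1 - q * z) * (1 + q * z)" "(q\<^sup>2 - 1) / 2"] n1 by simp
  qed
  have poly: "(q - 1) * ((1 - q * z) * (1 + q * z) + q * ((1 - z) * (1 + z))) * (q * z - 1)
      + (q\<^sup>2 - 1) * ((1 - q * z) * (1 + q * z))
      + (q\<^sup>2 - 1) * q * (z * (1 + z)) * (q * z - 1) = 0"
    by (simp add: power2_eq_square algebra_simps)
  have "(q - 1) / (2 * q) * (1 + q * ((1 - z) * (1 + z) / ((1 - q * z) * (1 + q * z))))
     + (q\<^sup>2 - 1) / (2 * q) / (q * z - 1)
     + (q\<^sup>2 - 1) / 2 * (z * (1 + z)) / ((1 - q * z) * (1 + q * z))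
     = ((q - 1) * ((1 - q * z) * (1 + q * z) + q * ((1 - z) * (1 + z))) * (q * z - 1)
      + (q\<^sup>2 - 1) * ((1 - q * z) * (1 + q * z))
      + (q\<^sup>2 - 1) * q * (z * (1 + z)) * (q * z - 1)) / (2 * q * ((1 - q * z) * (1 + q * z)) * (q * z - 1))"
  proof -
    have g: "(q - 1) / (2 * q) * (1 + q * (W / D)) + R / (2 * q) / Y + R / 2 * V / D
        = ((q - 1) * (D + q * W) * Y + R * D + R * q * V * Y) / (2 * q * D * Y)"
      if "D \<noteq> 0" "Y \<noteq> 0" for W D Y R V :: complex
      using that assms(1) by (simp add: field_simps)
    show ?thesis using g[of "(1 - q * z) * (1 + q * z)" "q * z - 1" "(1 - z) * (1 + z)" "q\<^sup>2 - 1" "z * (1 + z)"] n1 n3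
      by (simp add: mult.assoc)
  qed
  also have "\<dots> = 0" by (simp add: poly)
  finally have fin: "(q - 1) / (2 * q) * (1 + q * ((1 - z) * (1 + z) / ((1 - q * z) * (1 + q * z))))
     + (q\<^sup>2 - 1) / (2 * q) / (q * z - 1)
     + (q\<^sup>2 - 1) / 2 * (z * (1 + z)) / ((1 - q * z) * (1 + q * z)) = 0" .
  show ?thesis unfolding d1 d2 h1 h2 using fin by simp
qed

theorem lemma5p1:
  fixes E :: "nat \<Rightarrow> complex \<Rightarrow> complex" and \<theta> :: real
  assumes q_odd: "odd CARD('a::{field,finite})"
    and E_series: "\<And>n s. Re s > 1 \<Longrightarrow>
        ((\<lambda>cd. complex_of_real (psi_n n cd) powr s) has_sum E n s)
          (coset_reps :: ('a poly \<times> 'a poly) set)"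
    and E_holo: "\<And>n. \<exists>U. open U \<and> {s. Re s \<ge> 1/2} - eis_poles (real CARD('a)) \<subseteq> U
                        \<and> E n holomorphic_on U"
  shows "((\<lambda>n. complex_of_real (mu_q (real CARD('a)) n)
              * E n (1/2 + \<i> * of_real (\<theta> / ln (real CARD('a))))) has_sum 0) UNIV"
proof -
  define Q where "Q = real CARD('a)"
  define s0 where "s0 = 1/2 + \<i> * of_real (\<theta> / ln Q)"
  define z where "z = zf Q s0"
  have Q2: "2 \<le> Q" unfolding Q_def by (rule Q_ge2)
  have EF: "E n s0 = Fz Q n z" for n
    unfolding z_def s0_def Q_def by (rule E_eq_F[OF E_series E_holo])
  define r where "r = norm z"
  have r2: "r\<^sup>2 = 1 / Q"
  proof -
    have "r = exp (- (ln Q / 2))" by (simp add: r_def z_def zf_def s0_def)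
    then have "r\<^sup>2 = exp (- (ln Q / 2)) * exp (- (ln Q / 2))" by (simp add: power2_eq_square)
    also have "\<dots> = exp (- ln Q)" by (simp add: exp_add[symmetric])
    also have "\<dots> = 1 / Q" using Q2 by (simp add: exp_minus inverse_eq_divide)
    finally show ?thesis .
  qed
  have r0: "0 < r" by (simp add: r_def z_def zf_def)
  have r1: "r < 1"
  proof (rule ccontr)
    assume "\<not> r < 1"
    then have "1 \<le> r\<^sup>2" by (simp add: one_le_power)
    then show False using r2 Q2 by (simp add: field_simps)
  qed
  have Qr: "1 < Q * r"
  proof -
    have "(Q * r)\<^sup>2 = Q" using r2 Q2 by (simp add: power_mult_distrib field_simps power2_eq_square)
    then have "1 < (Q * r)\<^sup>2" using Q2 by simp
    then have "1 ^ 2 < (Q * r) ^ 2" by simp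
    then show ?thesis by (rule power_less_imp_less_base) (use r0 Q2 in simp)
  qed
  define q where "q = complex_of_real Q"
  have q0: "q \<noteq> 0" using Q2 by (simp add: q_def)
  have nqz: "norm (q * z) = Q * r" using Q2 by (simp add: q_def r_def norm_mult)
  have z0: "z \<noteq> 0" using r0 by (auto simp: r_def)
  have z1: "z \<noteq> 1" using r1 by (auto simp: r_def)
  have qz1: "q * z \<noteq> 1" using nqz Qr by auto
  have qz2: "q * z \<noteq> -1" using nqz Qr by auto
  define u where "u = 1 / (q * z)"
  have nu: "norm u < 1" using nqz Qr by (simp add: u_def norm_divide)
  define C where "C = (1 - z\<^sup>2) / (1 - q\<^sup>2 * z\<^sup>2)"
  define A where "A = (q\<^sup>2 - 1) / (2 * q)"
  define B where "B = (q\<^sup>2 - 1) / 2 * C"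
  define g where "g n = A * u ^ n + B * z ^ n" for n
  define tm where "tm n = complex_of_real (mu_q Q n) * E n s0" for n
  have tmS: "tm (Suc n) = g (Suc n)" for n
  proof -
    have gen: "(q\<^sup>2 - 1) / (2 * (q * X)) * (1 / Y + q * X * Y * C) = A * (1 / (X * Y)) + B * Y"
      if "X \<noteq> 0" "Y \<noteq> 0" for X Y
      using that q0 by (simp add: A_def B_def field_simps)
    have mu: "complex_of_real (mu_q Q (Suc n)) = (q\<^sup>2 - 1) / (2 * (q * q ^ Suc n))"
      by (simp add: mu_q_def q_def)
    have "tm (Suc n) = (q\<^sup>2 - 1) / (2 * (q * q ^ Suc n)) * (1 / z ^ Suc n + q * q ^ Suc n * z ^ Suc n * C)"
      unfolding tm_def EF mu by (simp add: Fz_def C_def q_def power_one_over mult.assoc)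
    also have "\<dots> = A * (1 / (q ^ Suc n * z ^ Suc n)) + B * z ^ Suc n"
      by (rule gen) (use q0 z0 in auto)
    also have "\<dots> = g (Suc n)" by (simp add: g_def u_def power_mult_distrib power_one_over)
    finally show ?thesis .
  qed
  have tm0: "tm 0 = (q - 1) / (2 * q) * (1 + q * C)"
    by (simp add: tm_def EF Fz_def mu_q_def q_def C_def)
  have gs: "g sums (A / (1 - u) + B / (1 - z))"
  proof -
    have "(\<lambda>n. A * u ^ n) sums (A * (1 / (1 - u)))" by (intro sums_mult geometric_sums nu)
    moreover have "(\<lambda>n. B * z ^ n) sums (B * (1 / (1 - z)))"
      using r1 by (intro sums_mult geometric_sums) (simp add: r_def)
    ultimately show ?thesis unfolding g_def by (simp add: sums_add)
  qed
  have "(\<lambda>n. g (Suc n)) sums (A / (1 - u) + B / (1 - z) - g 0)"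
    using gs sums_Suc_iff[of g "A / (1 - u) + B / (1 - z) - g 0"] by simp
  then have "(\<lambda>n. tm (Suc n)) sums (A / (1 - u) + B / (1 - z) - g 0)" by (simp add: tmS)
  then have tms: "tm sums (A / (1 - u) + B / (1 - z) - g 0 + tm 0)" by (simp add: sums_Suc_iff)
  have val: "A / (1 - u) + B / (1 - z) - g 0 + tm 0 = 0"
    using final_identity[OF q0 z0 z1 qz1 qz2]
    unfolding tm0 g_def A_def B_def u_def C_def by (simp add: algebra_simps)
  have summ: "summable (\<lambda>n. norm (tm n))"
  proof -
    have "summable (\<lambda>n. norm (g n))"
    proof (rule summable_comparison_test)
      show "\<exists>N. \<forall>n\<ge>N. norm (norm (g n)) \<le> norm A * norm u ^ n + norm B * r ^ n"
        by (auto simp: g_def r_def norm_mult norm_power intro!: order_trans[OF norm_triangle_ineq])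
      show "summable (\<lambda>n. norm A * norm u ^ n + norm B * r ^ n)"
        using nu r1 r0 by (intro summable_add summable_mult summable_geometric) auto
    qed
    then have "summable (\<lambda>n. norm (g (Suc n)))" using summable_Suc_iff[of "\<lambda>n. norm (g n)"] by simp
    then have "summable (\<lambda>n. norm (tm (Suc n)))" by (simp add: tmS)
    then show ?thesis using summable_Suc_iff[of "\<lambda>n. norm (tm n)"] by simp
  qed
  have "(tm has_sum 0) UNIV" using norm_summable_imp_has_sum[OF summ tms] val by simp
  then show ?thesis unfolding tm_def[abs_def] s0_def Q_def .
qed


end
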